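(* There is a universal constant $C>0$ such that the following holds. Let $N\ge1$, $d\ge1$, let $(x^{(s)},y^{(s)})_{s=1}^N$ be i.i.d. with $x^{(s)}$ uniform on $\{\pm1\}^d$ and $y^{(s)} = x^{(s)}_1x^{(s)}_2$, and $\widehat M := \frac1N\sum_{s=1}^N y^{(s)}x^{(s)}x^{(s)\top}$. For every $\delta\in(0,1)$, with probability at least $1-\delta$, \[ \|\widehat M\|_2 \le 1 + C\left(\sqrt{\frac{d\log(2d/\delta)}{N}} + \frac{d\log(2d/\delta)}{N}\right). \]
   Context: $\|\cdot\|_2$ is the spectral (operator) norm. *)

theory Defs
  imports "HOL-Probability.Probability"
begin

definition spec_norm :: "nat \<Rightarrow> (nat \<Rightarrow> nat \<Rightarrow> real) \<Rightarrow> real" where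
  "spec_norm d M = Sup {sqrt (\<Sum>i<d. (\<Sum>j<d. M i j * v j)\<^sup>2) | v. (\<Sum>j<d. (v j)\<^sup>2) = 1}"

text \<open>Sample space: N samples x^(s) in {-1,1}^d, indices s < N, i < d (0 elsewhere).
  The uniform distribution on this set is exactly N i.i.d. uniform draws from {-1,1}^d.\<close>
definition samples :: "nat \<Rightarrow> nat \<Rightarrow> (nat \<Rightarrow> nat \<Rightarrow> real) set" where
  "samples N d = {x. (\<forall>s<N. \<forall>i<d. x s i \<in> {-1, 1}) \<and> (\<forall>s i. \<not> (s < N \<and> i < d) \<longrightarrow> x s i = 0)}"

text \<open>Empirical matrix M = (1/N) sum_s y^(s) x^(s) x^(s)^T with y^(s) = x^(s)_1 x^(s)_2
  (coordinates 1,2 are indices 0,1 here).\<close>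
definition Mhat :: "nat \<Rightarrow> (nat \<Rightarrow> nat \<Rightarrow> real) \<Rightarrow> nat \<Rightarrow> nat \<Rightarrow> real" where
  "Mhat N x i j = (1 / real N) * (\<Sum>s<N. (x s 0 * x s 1) * x s i * x s j)"

end

theory Submission
  imports Defs
begin


definition cube :: "nat \<Rightarrow> (nat \<Rightarrow> real) set" where
  "cube d = {z. (\<forall>i<d. z i \<in> {-1,1}) \<and> (\<forall>i. d \<le> i \<longrightarrow> z i = 0)}"

lemma cube_0: "cube 0 = {\<lambda>_. 0}"
  unfolding cube_def by auto

lemma cube_Suc: "cube (Suc d) = (\<lambda>(z,a). z(d:=a)) ` (cube d \<times> {-1,1})"
proof (intro equalityI subsetI)
  fix x assume x: "x \<in> cube (Suc d)"
  have "x = (x(d:=0))(d := x d)" by simp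
  moreover have "x(d:=0) \<in> cube d" using x unfolding cube_def by auto
  moreover have "x d \<in> {-1,1}" using x unfolding cube_def by auto
  ultimately show "x \<in> (\<lambda>(z,a). z(d:=a)) ` (cube d \<times> {-1,1})"
    by (intro image_eqI[where x="(x(d:=0), x d)"]) auto
next
  fix x assume "x \<in> (\<lambda>(z,a). z(d:=a)) ` (cube d \<times> {-1,1})"
  then obtain z a where "z \<in> cube d" "a \<in> {-1,1}" "x = z(d:=a)" by auto
  then show "x \<in> cube (Suc d)" unfolding cube_def by (auto simp: less_Suc_eq)
qed

lemma inj_cube: "inj_on (\<lambda>(z,a). z(d:=a)) (cube d \<times> {-1,1})"
proof (rule inj_onI, clarify)
  fix z a z' a'
  assume h: "z \<in> cube d" "z' \<in> cube d" "z(d := a) = z'(d := a')"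
  have "a = a'" using fun_cong[OF h(3), of d] by simp
  moreover have "z = z'"
  proof
    fix i show "z i = z' i"
      using fun_cong[OF h(3), of i] h(1,2) unfolding cube_def by (cases "i = d") auto
  qed
  ultimately show "z = z' \<and> a = a'" by simp
qed

lemma finite_cube: "finite (cube d)"
  by (induction d) (auto simp: cube_0 cube_Suc)

lemma card_cube: "card (cube d) = 2 ^ d"
proof (induction d)
  case 0 then show ?case by (simp add: cube_0)
next
  case (Suc d)
  have "card (cube (Suc d)) = card (cube d \<times> {-1,1::real})"
    unfolding cube_Suc by (rule card_image[OF inj_cube])
  also have "\<dots> = 2 ^ d * 2" using Suc by (simp add: card_cartesian_product)
  finally show ?case by simp
qed

lemma sum_cube_Suc:
  "(\<Sum>z\<in>cube (Suc d). f z) = (\<Sum>z\<in>cube d. f (z(d:=1)) + f (z(d:=-1)))"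
proof -
  have "(\<Sum>z\<in>cube (Suc d). f z) = (\<Sum>(z,a)\<in>cube d \<times> {-1,1}. f (z(d:=a)))"
    unfolding cube_Suc by (subst sum.reindex[OF inj_cube]) (simp add: case_prod_unfold)
  also have "\<dots> = (\<Sum>z\<in>cube d. \<Sum>a\<in>{-1,1}. f (z(d:=a)))"
    by (rule sum.cartesian_product[symmetric])
  also have "\<dots> = (\<Sum>z\<in>cube d. f (z(d:=1)) + f (z(d:=-1)))"
    by (simp add: add.commute)
  finally show ?thesis .
qed



lemma samples_0: "samples 0 d = {\<lambda>_ _. 0}"
  unfolding samples_def by auto

lemma samples_Suc: "samples (Suc N) d = (\<lambda>(x,z). x(N:=z)) ` (samples N d \<times> cube d)"
proof (intro equalityI subsetI)
  fix x assume x: "x \<in> samples (Suc N) d"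
  have "x = (x(N:=(\<lambda>_. 0)))(N := x N)" by simp
  moreover have "x(N:=(\<lambda>_. 0)) \<in> samples N d" using x unfolding samples_def by auto
  moreover have "x N \<in> cube d" using x unfolding samples_def cube_def by auto
  ultimately show "x \<in> (\<lambda>(x,z). x(N:=z)) ` (samples N d \<times> cube d)"
    by (intro image_eqI[where x="(x(N:=(\<lambda>_. 0)), x N)"]) auto
next
  fix x assume "x \<in> (\<lambda>(x,z). x(N:=z)) ` (samples N d \<times> cube d)"
  then obtain y z where h: "y \<in> samples N d" "z \<in> cube d" "x = y(N:=z)" by auto
  show "x \<in> samples (Suc N) d" unfolding samples_def
  proof (intro CollectI conjI allI impI)
    fix s i assume "s < Suc N" "i < d"
    then show "x s i \<in> {-1,1}" using h unfolding samples_def cube_def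
      by (cases "s = N") auto
  next
    fix s i assume "\<not> (s < Suc N \<and> i < d)"
    then show "x s i = 0" using h unfolding samples_def cube_def
      by (cases "s = N") auto
  qed
qed

lemma inj_samples: "inj_on (\<lambda>(x,z). x(N:=z)) (samples N d \<times> cube d)"
proof (rule inj_onI, clarify)
  fix x z x' z'
  assume h: "x \<in> samples N d" "x' \<in> samples N d" "x(N := z) = x'(N := z')"
  have "z = z'" using fun_cong[OF h(3), of N] by simp
  moreover have "x = x'"
  proof
    fix s show "x s = x' s"
    proof (cases "s = N")
      case True
      then show ?thesis using h(1,2) unfolding samples_def by auto
    next
      case False
      then show ?thesis using fun_cong[OF h(3), of s] by simp
    qed
  qed
  ultimately show "x = x' \<and> z = z'" by simp
qed

lemma finite_samples: "finite (samples N d)"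
  by (induction N) (auto simp: samples_0 samples_Suc finite_cube)

lemma sum_samples_prod:
  fixes g :: "(nat \<Rightarrow> real) \<Rightarrow> real"
  shows "(\<Sum>x\<in>samples N d. \<Prod>s<N. g (x s)) = (\<Sum>z\<in>cube d. g z) ^ N"
proof (induction N)
  case 0 then show ?case by (simp add: samples_0)
next
  case (Suc N)
  have "(\<Sum>x\<in>samples (Suc N) d. \<Prod>s<Suc N. g (x s))
      = (\<Sum>(x,z)\<in>samples N d \<times> cube d. \<Prod>s<Suc N. g ((x(N:=z)) s))"
    unfolding samples_Suc by (subst sum.reindex[OF inj_samples]) (simp add: case_prod_unfold)
  also have "\<dots> = (\<Sum>(x,z)\<in>samples N d \<times> cube d. (\<Prod>s<N. g (x s)) * g z)"
    by (intro sum.cong refl) (auto simp: lessThan_Suc mult.commute intro!: prod.cong)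
  also have "\<dots> = (\<Sum>x\<in>samples N d. \<Sum>z\<in>cube d. (\<Prod>s<N. g (x s)) * g z)"
    by (rule sum.cartesian_product[symmetric])
  also have "\<dots> = (\<Sum>x\<in>samples N d. \<Prod>s<N. g (x s)) * (\<Sum>z\<in>cube d. g z)"
    by (simp add: sum_product)
  finally show ?case using Suc by simp
qed

lemma card_samples: "card (samples N d) = (2 ^ d) ^ N"
proof -
  have "real (card (samples N d)) = (\<Sum>x\<in>samples N d. \<Prod>s<N. (1::real))" by simp
  also have "\<dots> = (\<Sum>z\<in>cube d. (1::real)) ^ N" by (rule sum_samples_prod)
  also have "\<dots> = (2 ^ d) ^ N" by (simp add: card_cube)
  finally show ?thesis by (metis of_nat_eq_of_nat_power_cancel_iff of_nat_numeral of_nat_power)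
qed

lemma samples_ne: "samples N d \<noteq> {}"
  using card_samples[of N d] by auto



lemma cosh_le_aux:
  fixes b :: real assumes "b \<ge> 0"
  shows "exp b + exp (-b) \<le> 2 * exp (b^2/2)"
proof -
  have "-(2*b) * (1/2) + ln (1 + (1/2) * (exp (2*b) - 1)) \<le> (2*b)^2/8"
    using Hoeffdings_lemma_aux[of "2*b" "1/2"] assms by simp
  hence "ln ((1 + exp (2*b))/2) \<le> b + b^2/2"
    by (simp add: power2_eq_square field_simps)
  moreover have pos: "0 < (1 + exp (2*b))/2" by (simp add: add_pos_pos)
  ultimately have "(1 + exp (2*b))/2 \<le> exp (b + b^2/2)"
    by (metis exp_le_cancel_iff exp_ln)
  also have "\<dots> = exp b * exp (b^2/2)" by (simp add: exp_add)
  finally have "(1 + exp b * exp b)/2 \<le> exp b * exp (b^2/2)"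
    by (simp add: mult_exp_exp)
  hence "exp (-b) * ((1 + exp b * exp b)/2) \<le> exp (-b) * (exp b * exp (b^2/2))"
    by (intro mult_left_mono) auto
  thus ?thesis by (simp add: field_simps exp_minus)
qed

lemma cosh_le:
  fixes b :: real
  shows "exp b + exp (-b) \<le> 2 * exp (b^2/2)"
proof (cases "b \<ge> 0")
  case True then show ?thesis by (rule cosh_le_aux)
next
  case False
  then show ?thesis using cosh_le_aux[of "-b"] by simp
qed

definition lf :: "nat \<Rightarrow> (nat \<Rightarrow> real) \<Rightarrow> (nat \<Rightarrow> real) \<Rightarrow> real" where
  "lf d u z = (\<Sum>i<d. u i * z i)"

definition r2 :: "nat \<Rightarrow> (nat \<Rightarrow> real) \<Rightarrow> real" where
  "r2 d u = (\<Sum>i<d. (u i)^2)"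

lemma lf_mgf:
  "(\<Sum>z\<in>cube d. exp (t * lf d u z)) \<le> 2^d * exp (t^2 * r2 d u / 2)"
proof (induction d)
  case 0 then show ?case by (simp add: cube_0 lf_def r2_def)
next
  case (Suc d)
  have eq: "lf (Suc d) u (z(d:=a)) = lf d u z + u d * a" for z a
  proof -
    have "(\<Sum>i<d. u i * (z(d:=a)) i) = (\<Sum>i<d. u i * z i)"
      by (intro sum.cong) auto
    then show ?thesis unfolding lf_def by (simp add: sum.lessThan_Suc)
  qed
  have "(\<Sum>z\<in>cube (Suc d). exp (t * lf (Suc d) u z))
      = (\<Sum>z\<in>cube d. exp (t * lf d u z) * (exp (t * u d) + exp (-(t * u d))))"
    unfolding sum_cube_Suc eq by (intro sum.cong refl) (simp add: distrib_left right_diff_distrib exp_add exp_diff exp_minus field_simps)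
  also have "\<dots> \<le> (\<Sum>z\<in>cube d. exp (t * lf d u z) * (2 * exp ((t * u d)^2/2)))"
    by (intro sum_mono mult_left_mono cosh_le) auto
  also have "\<dots> = (\<Sum>z\<in>cube d. exp (t * lf d u z)) * (2 * exp ((t * u d)^2/2))"
    by (simp add: sum_distrib_right)
  also have "\<dots> \<le> 2^d * exp (t^2 * r2 d u / 2) * (2 * exp ((t * u d)^2/2))"
    by (intro mult_right_mono Suc) auto
  also have "\<dots> = 2^Suc d * (exp (t^2 * r2 d u / 2) * exp ((t * u d)^2/2))"
    by simp
  also have "\<dots> = 2^Suc d * exp (t^2 * r2 (Suc d) u / 2)"
  proof -
    have "r2 (Suc d) u = r2 d u + (u d)^2" unfolding r2_def by simp
    then have "t^2 * r2 d u / 2 + (t * u d)^2/2 = t^2 * r2 (Suc d) u / 2"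
      by (simp add: power_mult_distrib field_simps)
    then show ?thesis by (simp add: mult_exp_exp)
  qed
  finally show ?case .
qed

lemma pow_le_exp:
  fixes x :: real assumes "x \<ge> 0"
  shows "x^n / fact n \<le> exp x"
proof -
  obtain t where t: "\<bar>t\<bar> \<le> \<bar>x\<bar>" "exp x = (\<Sum>m<Suc n. (x ^ m) / fact m) + (exp t / fact (Suc n)) * x ^ (Suc n)"
    using Maclaurin_exp_le[of x "Suc n"] by blast
  have "x^n / fact n \<le> (\<Sum>m<Suc n. (x ^ m) / fact m)"
    by (rule member_le_sum) (use assms in auto)
  also have "\<dots> \<le> exp x" unfolding t(2) using assms by (intro add_increasing2) auto
  finally show ?thesis .
qed



lemma fact_double_le: "(fact (2*k) :: real) \<le> 4^k * fact k * real (k^k)"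
proof -
  have "fact k * fact (2*k - k) * (2*k choose k) = (fact (2*k) :: nat)"
    by (rule binomial_fact_lemma) simp
  hence "(fact (2*k) :: real) = fact k * fact k * real (2*k choose k)"
    by (metis diff_add_inverse2 mult_2 of_nat_fact of_nat_mult)
  also have "\<dots> \<le> fact k * real (k^k) * 4^k"
  proof -
    have "real (2*k choose k) \<le> 2^(2*k)"
      using binomial_le_pow2[of "2*k" k] by (metis of_nat_le_iff of_nat_numeral of_nat_power)
    also have "(2::real)^(2*k) = 4^k" by (simp add: power_mult)
    finally have b: "real (2*k choose k) \<le> 4^k" .
    have f: "(fact k :: real) \<le> real (k^k)" by (rule fact_le_power)
    show ?thesis by (intro mult_mono b f) auto
  qed
  finally show ?thesis by (simp add: mult_ac)
qed

lemma r2_nonneg: "r2 d u \<ge> 0" unfolding r2_def by (simp add: sum_nonneg)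

lemma moment:
  "(\<Sum>z\<in>cube d. (lf d u z)^(2*k) / fact k) \<le> 2^d * 2 * (2 * exp 1 * r2 d u)^k"
proof (cases "k = 0")
  case True then show ?thesis by (simp add: card_cube)
next
  case k: False
  show ?thesis
  proof (cases "r2 d u = 0")
    case True
    then have "\<forall>i<d. u i = 0" unfolding r2_def by (simp add: sum_nonneg_eq_0_iff)
    then have "lf d u z = 0" for z unfolding lf_def by simp
    then show ?thesis using k True by (simp add: zero_power)
  next
    case False
    define r where "r = r2 d u"
    have r: "r > 0" using False r2_nonneg[of d u] unfolding r_def by simp
    define t where "t = sqrt (2 * k / r)"
    have tpos: "t > 0" using r k unfolding t_def by simp
    have t2: "t^2 = 2 * k / r" unfolding t_def using r by simp
    have t2k: "t^(2*k) = (2*k/r)^k" by (simp add: power_mult t2)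
    have pt: "s^(2*k) \<le> fact (2*k) / t^(2*k) * (exp (t * s) + exp ((- t) * s))" for s :: real
    proof -
      have "(t*\<bar>s\<bar>)^(2*k) / fact (2*k) \<le> exp (t*\<bar>s\<bar>)"
        by (rule pow_le_exp) (use tpos in simp)
      also have "\<dots> \<le> exp (t * s) + exp ((- t) * s)"
        by (cases "s \<ge> 0") auto
      finally have "t^(2*k) * s^(2*k) \<le> fact (2*k) * (exp (t * s) + exp ((- t) * s))"
        by (simp add: power_mult_distrib power_even_abs field_simps)
      then show ?thesis using tpos by (simp add: field_simps)
    qed
    have "(\<Sum>z\<in>cube d. (lf d u z)^(2*k)) \<le>
          (\<Sum>z\<in>cube d. fact (2*k) / t^(2*k) * (exp (t * lf d u z) + exp ((- t) * lf d u z)))"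
      by (intro sum_mono pt)
    also have "\<dots> = fact (2*k) / t^(2*k) *
          ((\<Sum>z\<in>cube d. exp (t * lf d u z)) + (\<Sum>z\<in>cube d. exp ((- t) * lf d u z)))"
      by (simp only: sum_distrib_left[symmetric] sum.distrib)
    also have "\<dots> \<le> fact (2*k) / t^(2*k) * (2^d * exp (t^2 * r / 2) + 2^d * exp ((- t)^2 * r / 2))"
      unfolding r_def by (intro mult_left_mono add_mono lf_mgf) auto
    also have "\<dots> = fact (2*k) / (2*k/r)^k * (2 * 2^d * exp k)"
      using r by (simp add: t2k t2)
    finally have A: "(\<Sum>z\<in>cube d. (lf d u z)^(2*k)) \<le> fact (2*k) / (2*k/r)^k * (2 * 2^d * exp k)" .
    have "(\<Sum>z\<in>cube d. (lf d u z)^(2*k) / fact k) = (\<Sum>z\<in>cube d. (lf d u z)^(2*k)) / fact k"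
      by (simp add: sum_divide_distrib)
    also have "\<dots> \<le> fact (2*k) / (2*k/r)^k * (2 * 2^d * exp k) / fact k"
      by (intro divide_right_mono A) auto
    also have "\<dots> \<le> 4^k * fact k * real (k^k) / (2*k/r)^k * (2 * 2^d * exp k) / fact k"
      using r by (intro divide_right_mono mult_right_mono fact_double_le) auto
    also have "\<dots> = 2^d * 2 * (2 * exp 1 * r)^k"
    proof -
      have e: "exp (real k) = exp 1 ^ k" using exp_of_nat_mult[of k 1] by simp
      have "(4::real)^k * real (k^k) = (4 * real k)^k" by (simp add: power_mult_distrib)
      moreover have "(4 * real k) / (2*k/r) = 2 * r" using r k by (simp add: field_simps)
      ultimately have q: "(4::real)^k * real (k^k) / (2*k/r)^k = (2 * r)^k"
        by (metis power_divide)
      have fk: "(fact k :: real) > 0" by simp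
      have "4^k * fact k * real (k^k) / (2*k/r)^k * (2 * 2^d * exp k) / fact k
          = ((4::real)^k * real (k^k) / (2*k/r)^k) * (2 * 2^d * exp k)"
        using fk by (simp add: field_simps) (metis k gr0I)
      also have "\<dots> = (2 * r)^k * (2 * 2^d * exp 1 ^ k)" by (simp only: q e)
      also have "\<dots> = 2^d * 2 * (2 * exp 1 * r)^k" by (simp add: power_mult_distrib mult_ac)
      finally show ?thesis .
    qed
    finally show ?thesis unfolding r_def .
  qed
qed



lemma sqexp:
  assumes b: "\<beta> \<ge> 0" and q: "2 * exp 1 * \<beta> * r2 d u < 1"
  shows "(\<Sum>z\<in>cube d. exp (\<beta> * (lf d u z)^2)) \<le> 2^d * 2 / (1 - 2 * exp 1 * \<beta> * r2 d u)"
proof -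
  define qq where "qq = 2 * exp 1 * \<beta> * r2 d u"
  have qq0: "qq \<ge> 0" unfolding qq_def using b r2_nonneg[of d u] by simp
  have qq1: "qq < 1" using q unfolding qq_def .
  define f where "f z n = (\<beta> * (lf d u z)^2)^n / fact n" for z n
  have fs: "f z sums exp (\<beta> * (lf d u z)^2)" for z
    using exp_converges[of "\<beta> * (lf d u z)^2"] unfolding f_def by (simp add: divide_inverse mult.commute)
  have "(\<Sum>z\<in>cube d. exp (\<beta> * (lf d u z)^2)) = (\<Sum>z\<in>cube d. \<Sum>n. f z n)"
    using fs by (simp add: sums_iff)
  also have "\<dots> = (\<Sum>n. \<Sum>z\<in>cube d. f z n)"
    by (rule suminf_sum[symmetric]) (use fs in \<open>simp add: sums_iff\<close>)
  also have "\<dots> \<le> (\<Sum>n. 2^d * 2 * qq^n)"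
  proof (rule suminf_le)
    fix n
    have "(\<Sum>z\<in>cube d. f z n) = \<beta>^n * (\<Sum>z\<in>cube d. (lf d u z)^(2*n) / fact n)"
      unfolding f_def by (simp add: sum_distrib_left power_mult_distrib power_mult)
    also have "\<dots> \<le> \<beta>^n * (2^d * 2 * (2 * exp 1 * r2 d u)^n)"
      by (intro mult_left_mono moment) (use b in simp)
    also have "\<dots> = 2^d * 2 * qq^n" unfolding qq_def by (simp add: power_mult_distrib mult_ac)
    finally show "(\<Sum>z\<in>cube d. f z n) \<le> 2^d * 2 * qq^n" .
  next
    show "summable (\<lambda>n. \<Sum>z\<in>cube d. f z n)"
      by (rule summable_sum) (use fs in \<open>simp add: sums_iff\<close>)
  next
    show "summable (\<lambda>n. 2^d * 2 * qq^n :: real)"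
      by (intro summable_mult summable_geometric) (use qq0 qq1 in simp)
  qed
  also have "\<dots> = 2^d * 2 / (1 - qq)"
    using suminf_geometric[of qq] qq0 qq1 by (simp add: suminf_mult summable_geometric divide_inverse)
  finally show ?thesis unfolding qq_def .
qed



lemma expbound: fixes a :: real shows "exp a \<le> 1 + a + a^2 * exp \<bar>a\<bar>"
proof -
  obtain t where t: "\<bar>t\<bar> \<le> \<bar>a\<bar>" "exp a = (\<Sum>m<2. (a ^ m) / fact m) + (exp t / fact 2) * a ^ 2"
    using Maclaurin_exp_le[of a 2] by blast
  have "exp t \<le> exp \<bar>a\<bar>" using t(1) by simp
  then have "(exp t / fact 2) * a ^ 2 \<le> a^2 * exp \<bar>a\<bar>"
  proof -
    have "exp t * a^2 \<le> exp \<bar>a\<bar> * a^2" using \<open>exp t \<le> exp \<bar>a\<bar>\<close> by (intro mult_right_mono) auto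
    also have "\<dots> \<le> 2 * (exp \<bar>a\<bar> * a^2)" by simp
    finally show ?thesis by (simp add: fact_numeral mult.commute)
  qed
  moreover have "(\<Sum>m<2. (a ^ m) / fact m) = 1 + a" by (simp add: numeral_2_eq_2)
  ultimately show ?thesis using t(2) by simp
qed

lemma amgm: fixes x y :: real shows "x * y \<le> (x^2 + y^2)/2"
proof -
  have "0 \<le> (x - y)^2" by simp
  then show ?thesis by (simp add: power2_diff)
qed

definition W :: "nat \<Rightarrow> (nat \<Rightarrow> real) \<Rightarrow> (nat \<Rightarrow> real) \<Rightarrow> (nat \<Rightarrow> real) \<Rightarrow> real" where
  "W d u w z = z 0 * z 1 * lf d u z * lf d w z"

lemma sqexp16:
  assumes "r2 d u \<le> 81/64"
  shows "(\<Sum>z\<in>cube d. exp ((lf d u z)^2 / 8)) \<le> 2^d * 16"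
proof -
  have e: "exp (1::real) < 272/100" by (rule e_less_272)
  have r: "r2 d u \<ge> 0" by (rule r2_nonneg)
  have q: "2 * exp 1 * (1/8) * r2 d u \<le> 7/8"
  proof -
    have "2 * exp 1 * (1/8) * r2 d u \<le> 2 * (272/100) * (1/8) * (81/64)"
      using e r assms by (intro mult_mono) auto
    then show ?thesis by simp
  qed
  have "(\<Sum>z\<in>cube d. exp ((lf d u z)^2 / 8)) = (\<Sum>z\<in>cube d. exp ((1/8) * (lf d u z)^2))"
    by simp
  also have "\<dots> \<le> 2^d * 2 / (1 - 2 * exp 1 * (1/8) * r2 d u)"
    by (rule sqexp) (use q in auto)
  also have "\<dots> \<le> 2^d * 2 / (1 - 7/8)"
    using q by (intro divide_left_mono) auto
  finally show ?thesis by simp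
qed

lemma cube_01: assumes "z \<in> cube d" "2 \<le> d" shows "\<bar>z 0 * z 1\<bar> = 1"
proof -
  have "z 0 \<in> {-1,1}" "z 1 \<in> {-1,1}" using assms unfolding cube_def by auto
  then show ?thesis by (auto simp: abs_mult)
qed

lemma W_pt:
  assumes "z \<in> cube d" "2 \<le> d" "\<bar>l\<bar> \<le> 1/16"
  shows "exp (l * W d u w z) \<le> 1 + l * W d u w z
          + l^2 * (256 * (exp ((lf d u z)^2/8) + exp ((lf d w z)^2/8)))"
proof -
  define a where "a = lf d u z"
  define b where "b = lf d w z"
  define x where "x = \<bar>W d u w z\<bar>"
  have x0: "x \<ge> 0" unfolding x_def by simp
  have xab: "x \<le> (a^2 + b^2)/2"
  proof -
    have "x = \<bar>a\<bar> * \<bar>b\<bar>" unfolding x_def W_def a_def b_def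
      using cube_01[OF assms(1,2)] by (simp add: abs_mult)
    also have "\<dots> \<le> (a^2 + b^2)/2"
      using amgm[of "\<bar>a\<bar>" "\<bar>b\<bar>"] by simp
    finally show ?thesis .
  qed
  have B: "x^2 * exp (\<bar>l\<bar> * x) \<le> 256 * (exp (a^2/8) + exp (b^2/8))"
  proof -
    have "x^2 * exp (\<bar>l\<bar> * x) \<le> (512 * exp (x/16)) * exp (x/16)"
    proof (intro mult_mono)
      have "(x/16)^2 / fact 2 \<le> exp (x/16)" by (rule pow_le_exp) (use x0 in simp)
      then show "x^2 \<le> 512 * exp (x/16)" by (simp add: fact_numeral power_divide)
      have "\<bar>l\<bar> * x \<le> (1/16) * x" using assms(3) x0 by (intro mult_right_mono) auto
      then show "exp (\<bar>l\<bar> * x) \<le> exp (x/16)" by simp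
    qed auto
    also have "(512 * exp (x/16)) * exp (x/16) = 512 * exp (x/8)" by (simp add: mult_exp_exp)
    also have "exp (x/8) \<le> exp (a^2/16) * exp (b^2/16)"
      using xab by (simp add: mult_exp_exp)
    also have "exp (a^2/16) * exp (b^2/16) \<le> (exp (a^2/8) + exp (b^2/8))/2"
    proof -
      have "exp (a^2/16) * exp (b^2/16) \<le> ((exp (a^2/16))^2 + (exp (b^2/16))^2)/2"
        by (rule amgm)
      moreover have "(exp (a^2/16))^2 = exp (a^2/8)" "(exp (b^2/16))^2 = exp (b^2/8)"
        by (simp_all add: power2_eq_square mult_exp_exp)
      ultimately show ?thesis by simp
    qed
    finally show ?thesis by simp
  qed
  have "exp (l * W d u w z) \<le> 1 + l * W d u w z + (l * W d u w z)^2 * exp \<bar>l * W d u w z\<bar>"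
    by (rule expbound)
  also have "(l * W d u w z)^2 * exp \<bar>l * W d u w z\<bar> = l^2 * (x^2 * exp (\<bar>l\<bar> * x))"
    unfolding x_def by (simp add: power_mult_distrib abs_mult)
  also have "\<dots> \<le> l^2 * (256 * (exp (a^2/8) + exp (b^2/8)))"
    by (intro mult_left_mono B) auto
  finally show ?thesis unfolding a_def b_def by simp
qed



lemma W_mgf0:
  assumes d: "2 \<le> d" and ru: "r2 d u \<le> 81/64" and rw: "r2 d w \<le> 81/64" and l: "\<bar>l\<bar> \<le> 1/16"
  shows "(\<Sum>z\<in>cube d. exp (l * W d u w z)) \<le> 2^d * exp (l * ((\<Sum>z\<in>cube d. W d u w z) / 2^d) + 8192 * l^2)"
proof -
  define mu where "mu = (\<Sum>z\<in>cube d. W d u w z) / 2^d"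
  have "(\<Sum>z\<in>cube d. exp (l * W d u w z)) \<le> (\<Sum>z\<in>cube d. 1 + l * W d u w z
          + l^2 * (256 * (exp ((lf d u z)^2/8) + exp ((lf d w z)^2/8))))"
    by (intro sum_mono W_pt d l)
  also have "\<dots> = 2^d + l * (\<Sum>z\<in>cube d. W d u w z) + l^2 * 256 *
      ((\<Sum>z\<in>cube d. exp ((lf d u z)^2/8)) + (\<Sum>z\<in>cube d. exp ((lf d w z)^2/8)))"
    by (simp add: sum.distrib sum_distrib_left card_cube algebra_simps)
  also have "\<dots> \<le> 2^d + l * (\<Sum>z\<in>cube d. W d u w z) + l^2 * 256 * (2^d * 16 + 2^d * 16)"
    by (intro add_left_mono mult_left_mono add_mono sqexp16 ru rw) auto
  also have "\<dots> = 2^d * (1 + (l * mu + 8192 * l^2))"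
    unfolding mu_def by (simp add: algebra_simps)
  also have "\<dots> \<le> 2^d * exp (l * mu + 8192 * l^2)"
    by (intro mult_left_mono exp_ge_add_one_self) auto
  finally show ?thesis unfolding mu_def .
qed

lemma W_mgf:
  assumes d: "2 \<le> d" and ru: "r2 d u \<le> 81/64" and rw: "r2 d w \<le> 81/64" and l: "\<bar>l\<bar> \<le> 1/16"
      and mu: "mu = (\<Sum>z\<in>cube d. W d u w z) / 2^d"
  shows "(\<Sum>z\<in>cube d. exp (l * (W d u w z - mu))) \<le> 2^d * exp (8192 * l^2)"
proof -
  have "(\<Sum>z\<in>cube d. exp (l * (W d u w z - mu))) = exp (- (l * mu)) * (\<Sum>z\<in>cube d. exp (l * W d u w z))"
    by (simp add: sum_distrib_left right_diff_distrib exp_diff exp_minus field_simps)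
  also have "\<dots> \<le> exp (- (l * mu)) * (2^d * exp (l * mu + 8192 * l^2))"
    using W_mgf0[OF d ru rw l] unfolding mu[symmetric] by (intro mult_left_mono) auto
  also have "\<dots> = 2^d * exp (8192 * l^2)"
    by (simp add: exp_add exp_minus field_simps)
  finally show ?thesis .
qed

lemma sum_flip:
  assumes "k < d"
  shows "(\<Sum>z\<in>cube d. f z) = (\<Sum>z\<in>cube d. f (z(k := - z k)))"
  by (rule sum.reindex_bij_witness[where i="\<lambda>z. z(k := - z k)" and j="\<lambda>z. z(k := - z k)"])
     (use assms in \<open>auto simp: cube_def\<close>)

definition Emat :: "nat \<Rightarrow> nat \<Rightarrow> real" where
  "Emat i j = (if (i = 0 \<and> j = 1) \<or> (i = 1 \<and> j = 0) then 1 else 0)"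

lemma sum_zero_by_flip:
  assumes "k < d" "\<And>z. f (z(k := - z k)) = - f z"
  shows "(\<Sum>z\<in>cube d. f z) = (0::real)"
  using sum_flip[OF assms(1), of f] assms(2) by (simp add: sum_negf)

lemma four:
  assumes d: "2 \<le> d" and ij: "i < d" "j < d"
  shows "(\<Sum>z\<in>cube d. z 0 * z 1 * z i * z j) = 2^d * Emat i j"
proof (cases "(i = 0 \<and> j = 1) \<or> (i = 1 \<and> j = 0)")
  case True
  have "z 0 * z 1 * z i * z j = 1" if "z \<in> cube d" for z
  proof -
    have "z 0 \<in> {-1,1}" "z 1 \<in> {-1,1}" using that d unfolding cube_def by auto
    then show ?thesis using True by auto
  qed
  then show ?thesis using True by (simp add: Emat_def card_cube)
next
  case False
  then have E0: "Emat i j = 0" by (simp add: Emat_def)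
  show ?thesis
  proof (cases "i = j")
    case True
    have "(\<Sum>z\<in>cube d. z 0 * z 1 * z i * z j) = 0"
      by (rule sum_zero_by_flip[of 0]) (use d True in \<open>auto simp: fun_upd_def\<close>)
    then show ?thesis using E0 by simp
  next
    case ne: False
    show ?thesis
    proof (cases "i \<notin> {0,1}")
      case True
      have "(\<Sum>z\<in>cube d. z 0 * z 1 * z i * z j) = 0"
        by (rule sum_zero_by_flip[of i]) (use ij True ne in \<open>auto simp: fun_upd_def\<close>)
      then show ?thesis using E0 by simp
    next
      case False
      then have j: "j \<notin> {0,1}" using ne \<open>\<not> ((i = 0 \<and> j = 1) \<or> (i = 1 \<and> j = 0))\<close> by auto
      have "(\<Sum>z\<in>cube d. z 0 * z 1 * z i * z j) = 0"
        by (rule sum_zero_by_flip[of j]) (use ij j ne in \<open>auto simp: fun_upd_def\<close>)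
      then show ?thesis using E0 by simp
    qed
  qed
qed

lemma sum_W:
  assumes d: "2 \<le> d"
  shows "(\<Sum>z\<in>cube d. W d u w z) = 2^d * (\<Sum>i<d. \<Sum>j<d. u i * Emat i j * w j)"
proof -
  have "(\<Sum>z\<in>cube d. W d u w z) = (\<Sum>z\<in>cube d. \<Sum>i<d. \<Sum>j<d. u i * w j * (z 0 * z 1 * z i * z j))"
    unfolding W_def lf_def by (intro sum.cong refl) (simp add: sum_product sum_distrib_left mult_ac)
  also have "\<dots> = (\<Sum>i<d. \<Sum>j<d. u i * w j * (\<Sum>z\<in>cube d. z 0 * z 1 * z i * z j))"
    by (simp add: sum.swap[of _ "cube d"] sum_distrib_left)
  also have "\<dots> = (\<Sum>i<d. \<Sum>j<d. u i * w j * (2^d * Emat i j))"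
    by (intro sum.cong refl) (subst four[OF d], auto)
  also have "\<dots> = 2^d * (\<Sum>i<d. \<Sum>j<d. u i * Emat i j * w j)"
    by (simp add: sum_distrib_left mult_ac)
  finally show ?thesis .
qed



definition app :: "nat \<Rightarrow> (nat \<Rightarrow> nat \<Rightarrow> real) \<Rightarrow> (nat \<Rightarrow> real) \<Rightarrow> nat \<Rightarrow> real" where
  "app d M v i = (\<Sum>j<d. M i j * v j)"

definition nrm :: "nat \<Rightarrow> (nat \<Rightarrow> real) \<Rightarrow> real" where
  "nrm d v = L2_set v {..<d}"

lemma spec_eq: "spec_norm d M = Sup {nrm d (app d M v) | v. (\<Sum>j<d. (v j)^2) = 1}"
  unfolding spec_norm_def nrm_def app_def L2_set_def by simp

lemma CS: "(\<Sum>i<d. a i * b i) \<le> nrm d a * nrm d b"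
proof -
  have "(\<Sum>i<d. a i * b i) \<le> (\<Sum>i<d. \<bar>a i\<bar> * \<bar>b i\<bar>)"
    by (intro sum_mono) (simp add: abs_mult[symmetric])
  also have "\<dots> \<le> nrm d a * nrm d b" unfolding nrm_def by (rule L2_set_mult_ineq)
  finally show ?thesis .
qed

lemma nrm_nonneg: "nrm d v \<ge> 0" unfolding nrm_def by (simp add: L2_set_def sum_nonneg)

lemma unit_coord: fixes v :: "nat \<Rightarrow> real" assumes "(\<Sum>j<d. (v j)^2) = 1" "j < d" shows "\<bar>v j\<bar> \<le> 1"
proof -
  have "(v j)^2 \<le> (\<Sum>j<d. (v j)^2)" by (rule member_le_sum) (use assms in auto)
  then have "(v j)^2 \<le> 1" using assms by simp
  then show ?thesis by (simp add: abs_square_le_1)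
qed

lemma spec_bdd: "bdd_above {nrm d (app d M v) | v. (\<Sum>j<d. (v j)^2) = 1}"
proof (rule bdd_aboveI, clarify)
  fix v :: "nat \<Rightarrow> real" assume v: "(\<Sum>j<d. (v j)^2) = 1"
  have "nrm d (app d M v) \<le> (\<Sum>i<d. \<bar>app d M v i\<bar>)" unfolding nrm_def by (rule L2_set_le_sum_abs)
  also have "\<dots> \<le> (\<Sum>i<d. \<Sum>j<d. \<bar>M i j\<bar>)"
  proof (intro sum_mono)
    fix i
    have "\<bar>app d M v i\<bar> \<le> (\<Sum>j<d. \<bar>M i j * v j\<bar>)" unfolding app_def by (rule sum_abs)
    also have "\<dots> \<le> (\<Sum>j<d. \<bar>M i j\<bar>)"
    proof (intro sum_mono)
      fix j assume "j \<in> {..<d}"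
      then have "\<bar>v j\<bar> \<le> 1" using unit_coord[OF v] by simp
      then show "\<bar>M i j * v j\<bar> \<le> \<bar>M i j\<bar>" by (simp add: abs_mult mult_left_le)
    qed
    finally show "\<bar>app d M v i\<bar> \<le> (\<Sum>j<d. \<bar>M i j\<bar>)" .
  qed
  finally show "nrm d (app d M v) \<le> (\<Sum>i<d. \<Sum>j<d. \<bar>M i j\<bar>)" .
qed

lemma spec_upper: assumes "(\<Sum>j<d. (v j)^2) = 1" shows "nrm d (app d M v) \<le> spec_norm d M"
  unfolding spec_eq by (rule cSup_upper) (use assms spec_bdd in auto)

lemma unit_exists: fixes d :: nat assumes "1 \<le> d" shows "(\<Sum>j<d. ((\<lambda>j. if j = 0 then 1 else 0::real) j)^2) = 1"
proof -
  have "(\<Sum>j<d. ((\<lambda>j. if j = 0 then 1 else 0::real) j)^2) = (\<Sum>j<d. if j = 0 then 1 else 0)"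
    by (intro sum.cong) auto
  also have "\<dots> = 1" using assms by (subst sum.delta) auto
  finally show ?thesis .
qed

lemma spec_least:
  assumes "1 \<le> d" "\<And>v. (\<Sum>j<d. (v j)^2) = 1 \<Longrightarrow> nrm d (app d M v) \<le> b"
  shows "spec_norm d M \<le> b"
  unfolding spec_eq by (rule cSup_least) (use assms unit_exists[OF assms(1)] in auto)

lemma spec_nonneg: assumes "1 \<le> d" shows "spec_norm d M \<ge> 0"
  using spec_upper[OF unit_exists[OF assms], of M] nrm_nonneg[of d] by (meson order_trans)

lemma spec_scale:
  assumes "1 \<le> d"
  shows "nrm d (app d M z) \<le> spec_norm d M * nrm d z"
proof (cases "nrm d z = 0")
  case True
  then have "\<forall>j<d. z j = 0" unfolding nrm_def by (simp add: L2_set_eq_0_iff)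
  then have "app d M z i = 0" for i unfolding app_def by simp
  then show ?thesis using True by (simp add: nrm_def L2_set_def)
next
  case False
  define n where "n = nrm d z"
  have n: "n > 0" using False nrm_nonneg[of d z] unfolding n_def by simp
  define v where "v j = z j / n" for j
  have "(\<Sum>j<d. (v j)^2) = (\<Sum>j<d. (z j)^2) / n^2"
    unfolding v_def by (simp add: power_divide sum_divide_distrib)
  also have "(\<Sum>j<d. (z j)^2) = n^2" unfolding n_def nrm_def L2_set_def
    by (simp add: sum_nonneg)
  finally have vu: "(\<Sum>j<d. (v j)^2) = 1" using n by simp
  have "app d M v i = app d M z i / n" for i
    unfolding app_def v_def by (simp add: sum_divide_distrib)
  then have "nrm d (app d M v) = nrm d (app d M z) / n"
    unfolding nrm_def L2_set_def using n
    by (simp add: power_divide sum_divide_distrib[symmetric] real_sqrt_divide)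
  then have "nrm d (app d M z) / n \<le> spec_norm d M" using spec_upper[OF vu, of M] by simp
  then show ?thesis using n unfolding n_def by (simp add: field_simps)
qed



lemma nrm_sq: "(nrm d v)^2 = (\<Sum>i<d. (v i)^2)"
  unfolding nrm_def L2_set_def by (simp add: sum_nonneg)

lemma net_lemma:
  assumes d: "1 \<le> d"
    and sym: "\<And>i j. i < d \<Longrightarrow> j < d \<Longrightarrow> A i j = A j i"
    and net: "\<And>v. (\<Sum>j<d. (v j)^2) = 1 \<Longrightarrow> \<exists>w\<in>V. nrm d (\<lambda>j. v j - w j) \<le> 1/8 \<and> nrm d w \<le> 9/8"
    and bil: "\<And>u w. u \<in> V \<Longrightarrow> w \<in> V \<Longrightarrow> (\<Sum>i<d. u i * app d A w i) \<le> t"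
    and t: "t \<ge> 0"
  shows "spec_norm d A \<le> 64 * t / 47"
proof -
  define S where "S = spec_norm d A"
  have S0: "S \<ge> 0" unfolding S_def by (rule spec_nonneg[OF d])
  have key: "nrm d (app d A v) \<le> t + 17/64 * S" if v: "(\<Sum>j<d. (v j)^2) = 1" for v
  proof -
    define z where "z = app d A v"
    define n where "n = nrm d z"
    have nS: "n \<le> S" unfolding n_def z_def S_def by (rule spec_upper[OF v])
    show ?thesis
    proof (cases "n = 0")
      case True then show ?thesis using S0 t unfolding n_def z_def by simp
    next
      case False
      then have n: "n > 0" using nrm_nonneg[of d z] unfolding n_def by simp
      define us where "us i = z i / n" for i
      have nn: "n^2 = (\<Sum>j<d. (z j)^2)" using nrm_sq[of d z] unfolding n_def .
      have "(\<Sum>j<d. (us j)^2) = (\<Sum>j<d. (z j)^2) / n^2"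
        unfolding us_def by (simp add: power_divide sum_divide_distrib)
      also have "\<dots> = 1" unfolding nn[symmetric] using n by simp
      finally have usu: "(\<Sum>j<d. (us j)^2) = 1" .
      obtain u where u: "u \<in> V" "nrm d (\<lambda>j. us j - u j) \<le> 1/8" "nrm d u \<le> 9/8"
        using net[OF usu] by blast
      obtain w where w: "w \<in> V" "nrm d (\<lambda>j. v j - w j) \<le> 1/8" "nrm d w \<le> 9/8"
        using net[OF v] by blast
      have "(\<Sum>i<d. us i * z i) = (\<Sum>j<d. (z j)^2) / n"
        unfolding us_def by (simp add: power2_eq_square sum_divide_distrib)
      also have "\<dots> = n" unfolding nn[symmetric] using n by (simp add: power2_eq_square)
      finally have "n = (\<Sum>i<d. us i * z i)" by simp
      also have "\<dots> = (\<Sum>i<d. u i * z i) + (\<Sum>i<d. (us i - u i) * z i)"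
        by (simp add: sum.distrib[symmetric] algebra_simps)
      also have "(\<Sum>i<d. u i * z i) = (\<Sum>i<d. u i * app d A w i) + (\<Sum>i<d. u i * app d A (\<lambda>j. v j - w j) i)"
        unfolding z_def app_def
        by (simp add: sum.distrib[symmetric] sum_distrib_left[symmetric] algebra_simps sum_subtractf)
      also have "(\<Sum>i<d. u i * app d A (\<lambda>j. v j - w j) i) = (\<Sum>j<d. (v j - w j) * app d A u j)"
      proof -
        have "(\<Sum>i<d. u i * app d A (\<lambda>j. v j - w j) i) = (\<Sum>i<d. \<Sum>j<d. u i * A i j * (v j - w j))"
          unfolding app_def by (simp add: sum_distrib_left mult_ac)
        also have "\<dots> = (\<Sum>j<d. \<Sum>i<d. u i * A i j * (v j - w j))" by (rule sum.swap)
        also have "\<dots> = (\<Sum>j<d. (v j - w j) * app d A u j)"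
          unfolding app_def by (intro sum.cong refl) (simp add: sum_distrib_left sym mult_ac)
        finally show ?thesis .
      qed
      finally have neq: "n = (\<Sum>i<d. u i * app d A w i) + (\<Sum>j<d. (v j - w j) * app d A u j)
                         + (\<Sum>i<d. (us i - u i) * z i)" .
      have b1: "(\<Sum>i<d. u i * app d A w i) \<le> t" by (rule bil[OF u(1) w(1)])
      have b2: "(\<Sum>j<d. (v j - w j) * app d A u j) \<le> 1/8 * (S * (9/8))"
      proof -
        have "(\<Sum>j<d. (v j - w j) * app d A u j) \<le> nrm d (\<lambda>j. v j - w j) * nrm d (app d A u)"
          by (rule CS)
        also have "\<dots> \<le> 1/8 * (S * (9/8))"
        proof (intro mult_mono)
          have "nrm d (app d A u) \<le> S * nrm d u" unfolding S_def by (rule spec_scale[OF d])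
          also have "\<dots> \<le> S * (9/8)" using u(3) S0 by (intro mult_left_mono) auto
          finally show "nrm d (app d A u) \<le> S * (9/8)" .
        qed (use w(2) nrm_nonneg in auto)
        finally show ?thesis .
      qed
      have b3: "(\<Sum>i<d. (us i - u i) * z i) \<le> 1/8 * S"
      proof -
        have "(\<Sum>i<d. (us i - u i) * z i) \<le> nrm d (\<lambda>i. us i - u i) * nrm d z" by (rule CS)
        also have "\<dots> \<le> 1/8 * S" using u(2) nS unfolding n_def by (intro mult_mono) (auto simp: nrm_nonneg)
        finally show ?thesis .
      qed
      have "n \<le> t + 17/64 * S" using neq b1 b2 b3 by linarith
      then show ?thesis unfolding n_def z_def .
    qed
  qed
  have "spec_norm d A \<le> t + 17/64 * S" by (rule spec_least[OF d key])
  then have "S \<le> t + 17/64 * S" unfolding S_def .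
  then show ?thesis unfolding S_def[symmetric] by simp
qed



definition grid :: "nat \<Rightarrow> (nat \<Rightarrow> int) \<Rightarrow> nat \<Rightarrow> real" where
  "grid d k j = (if j < d then real_of_int (k j) / (8 * real d) else 0)"

definition netV :: "nat \<Rightarrow> (nat \<Rightarrow> real) set" where
  "netV d = {w \<in> grid d ` (PiE {..<d} (\<lambda>_. {-(8*int d)..8*int d})). nrm d w \<le> 9/8}"

lemma netV_sub: "netV d \<subseteq> grid d ` (PiE {..<d} (\<lambda>_. {-(8*int d)..8*int d}))"
  unfolding netV_def by blast

lemma finite_netV: "finite (netV d)"
  by (rule finite_subset[OF netV_sub]) (intro finite_imageI finite_PiE; simp)

lemma card_netV: "card (netV d) \<le> (16 * d + 1) ^ d"
proof -
  have "card (netV d) \<le> card (grid d ` (PiE {..<d} (\<lambda>_. {-(8*int d)..8*int d})))"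
    by (intro card_mono netV_sub finite_imageI finite_PiE) simp_all
  also have "\<dots> \<le> card (PiE {..<d} (\<lambda>_. {-(8*int d)..8*int d}))" by (rule card_image_le) (simp add: finite_PiE)
  also have "\<dots> = (\<Prod>i<d. card {-(8*int d)..8*int d})" by (rule card_PiE) simp
  also have "\<dots> = (16 * d + 1) ^ d"
  proof -
    have "nat (16 * int d + 1) = 16 * d + 1" by (simp add: nat_add_distrib nat_mult_distrib)
    then show ?thesis by simp
  qed
  finally show ?thesis .
qed

lemma nrm_diff_sym: "nrm d (\<lambda>j. a j - b j) = nrm d (\<lambda>j. b j - a j)"
  unfolding nrm_def L2_set_def by (simp add: power2_commute)

lemma net_prop:
  assumes d: "1 \<le> d" and v: "(\<Sum>j<d. (v j)^2) = 1"
  shows "\<exists>w\<in>netV d. nrm d (\<lambda>j. v j - w j) \<le> 1/8 \<and> nrm d w \<le> 9/8"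
proof -
  define k where "k j = (if j < d then \<lfloor>8 * real d * v j\<rfloor> else undefined)" for j
  define w where "w = grid d k"
  have dpos: "real d > 0" using d by simp
  have kr: "k j \<in> {-(8*int d)..8*int d}" if j: "j < d" for j
  proof -
    have "\<bar>v j\<bar> \<le> 1" by (rule unit_coord[OF v j])
    then have a: "-1 \<le> v j" "v j \<le> 1" by auto
    have b1: "8 * real d * v j \<le> 8 * real d * 1" using a(2) dpos by (intro mult_left_mono) auto
    have b2: "8 * real d * (-1) \<le> 8 * real d * v j" using a(1) dpos by (intro mult_left_mono) auto
    have c1: "\<lfloor>8 * real d * v j\<rfloor> \<le> 8 * int d"
      using b1 by (simp add: floor_le_iff)
    have c2: "-(8 * int d) \<le> \<lfloor>8 * real d * v j\<rfloor>"
      using b2 by (simp add: le_floor_iff)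
    show ?thesis unfolding k_def using j c1 c2 by simp
  qed
  have kP: "k \<in> PiE {..<d} (\<lambda>_. {-(8*int d)..8*int d})"
    using kr unfolding k_def by (auto simp: PiE_def extensional_def)
  have err: "\<bar>v j - w j\<bar> \<le> 1 / (8 * real d)" if j: "j < d" for j
  proof -
    have "w j = real_of_int \<lfloor>8 * real d * v j\<rfloor> / (8 * real d)"
      unfolding w_def grid_def k_def using j by simp
    moreover have fl: "8 * real d * v j - 1 < real_of_int \<lfloor>8 * real d * v j\<rfloor>"
      "real_of_int \<lfloor>8 * real d * v j\<rfloor> \<le> 8 * real d * v j" by linarith+
    ultimately have "v j - w j = (8 * real d * v j - real_of_int \<lfloor>8 * real d * v j\<rfloor>) / (8 * real d)"
      using dpos by (simp add: diff_divide_distrib)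
    moreover have "0 \<le> 8 * real d * v j - real_of_int \<lfloor>8 * real d * v j\<rfloor>"
      "8 * real d * v j - real_of_int \<lfloor>8 * real d * v j\<rfloor> \<le> 1" using fl by linarith+
    ultimately show ?thesis using dpos by (simp add: divide_right_mono)
  qed
  have e1: "nrm d (\<lambda>j. v j - w j) \<le> 1/8"
  proof -
    have "(\<Sum>j<d. (v j - w j)^2) \<le> (\<Sum>j<d. (1 / (8 * real d))^2)"
    proof (intro sum_mono)
      fix j assume "j \<in> {..<d}"
      then have "\<bar>v j - w j\<bar>^2 \<le> (1 / (8 * real d))^2" by (intro power_mono err) auto
      then show "(v j - w j)^2 \<le> (1 / (8 * real d))^2" by simp
    qed
    also have "\<dots> = 1 / (64 * real d)" using dpos by (simp add: power2_eq_square)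
    also have "\<dots> \<le> 1/64" using d by (simp add: field_simps)
    finally have "(nrm d (\<lambda>j. v j - w j))^2 \<le> (1/8)^2" unfolding nrm_sq by (simp add: power_divide)
    then show ?thesis by (rule power2_le_imp_le) simp
  qed
  have e2: "nrm d w \<le> 9/8"
  proof -
    have "nrm d w = nrm d (\<lambda>j. v j + (w j - v j))" by simp
    also have "\<dots> \<le> nrm d v + nrm d (\<lambda>j. w j - v j)" unfolding nrm_def by (rule L2_set_triangle_ineq)
    also have "nrm d v = 1" unfolding nrm_def L2_set_def using v by simp
    also have "nrm d (\<lambda>j. w j - v j) \<le> 1/8" using e1 nrm_diff_sym by metis
    finally show ?thesis by simp
  qed
  have "w \<in> netV d" unfolding netV_def w_def using kP e2 unfolding w_def by auto
  then show ?thesis using e1 e2 by blast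
qed

lemma netV_r2: "w \<in> netV d \<Longrightarrow> r2 d w \<le> 81/64"
proof -
  assume "w \<in> netV d"
  then have "nrm d w \<le> 9/8" unfolding netV_def by auto
  then have "(nrm d w)^2 \<le> (9/8)^2" by (intro power_mono nrm_nonneg)
  then show ?thesis unfolding r2_def nrm_sq[symmetric] by (simp add: power_divide)
qed



definition Rm :: "nat \<Rightarrow> (nat \<Rightarrow> nat \<Rightarrow> real) \<Rightarrow> nat \<Rightarrow> nat \<Rightarrow> real" where
  "Rm N x i j = Mhat N x i j - Emat i j"

definition muE :: "nat \<Rightarrow> (nat \<Rightarrow> real) \<Rightarrow> (nat \<Rightarrow> real) \<Rightarrow> real" where
  "muE d u w = (\<Sum>i<d. \<Sum>j<d. u i * Emat i j * w j)"

lemma W_expand: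
  "W d u w z = (\<Sum>i<d. \<Sum>j<d. u i * w j * (z 0 * z 1 * z i * z j))"
proof -
  have "W d u w z = (z 0 * z 1) * ((\<Sum>i<d. u i * z i) * (\<Sum>j<d. w j * z j))"
    unfolding W_def lf_def by (simp only: mult.assoc)
  also have "\<dots> = (z 0 * z 1) * (\<Sum>i<d. \<Sum>j<d. (u i * z i) * (w j * z j))"
    by (simp only: sum_product)
  also have "\<dots> = (\<Sum>i<d. \<Sum>j<d. (z 0 * z 1) * ((u i * z i) * (w j * z j)))"
    by (simp only: sum_distrib_left)
  also have "\<dots> = (\<Sum>i<d. \<Sum>j<d. u i * w j * (z 0 * z 1 * z i * z j))"
    by (intro sum.cong refl) (simp only: mult_ac)
  finally show ?thesis .
qed

lemma bil_Mhat:
  "(\<Sum>i<d. u i * app d (Mhat N x) w i) = (1 / real N) * (\<Sum>s<N. W d u w (x s))"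
proof -
  define f where "f i j s = u i * w j * (x s 0 * x s 1 * x s i * x s j)" for i j s
  have "(\<Sum>i<d. u i * app d (Mhat N x) w i) = (\<Sum>i<d. \<Sum>j<d. (1 / real N) * (\<Sum>s<N. f i j s))"
  proof (intro sum.cong refl)
    fix i
    have "u i * app d (Mhat N x) w i = (\<Sum>j<d. u i * (Mhat N x i j * w j))"
      unfolding app_def by (simp only: sum_distrib_left)
    also have "\<dots> = (\<Sum>j<d. (1 / real N) * (\<Sum>s<N. f i j s))"
    proof (intro sum.cong refl)
      fix j
      have "u i * (Mhat N x i j * w j) = (1 / real N) * ((\<Sum>s<N. x s 0 * x s 1 * x s i * x s j) * (u i * w j))"
        unfolding Mhat_def by (simp only: mult_ac)
      also have "\<dots> = (1 / real N) * (\<Sum>s<N. f i j s)"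
        unfolding f_def sum_distrib_right by (simp only: mult_ac)
      finally show "u i * (Mhat N x i j * w j) = (1 / real N) * (\<Sum>s<N. f i j s)" .
    qed
    finally show "u i * app d (Mhat N x) w i = (\<Sum>j<d. (1 / real N) * (\<Sum>s<N. f i j s))" .
  qed
  also have "\<dots> = (1 / real N) * (\<Sum>i<d. \<Sum>j<d. \<Sum>s<N. f i j s)"
    by (simp only: sum_distrib_left)
  also have "(\<Sum>i<d. \<Sum>j<d. \<Sum>s<N. f i j s) = (\<Sum>i<d. \<Sum>s<N. \<Sum>j<d. f i j s)"
    by (intro sum.cong refl sum.swap)
  also have "\<dots> = (\<Sum>s<N. \<Sum>i<d. \<Sum>j<d. f i j s)"
    by (rule sum.swap)
  also have "\<dots> = (\<Sum>s<N. W d u w (x s))"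
    unfolding f_def W_expand ..
  finally show ?thesis .
qed

lemma bil_Emat: "(\<Sum>i<d. u i * app d Emat w i) = muE d u w"
  unfolding app_def muE_def by (simp add: sum_distrib_left mult_ac)

lemma bil_R:
  assumes N: "1 \<le> N"
  shows "(\<Sum>i<d. u i * app d (Rm N x) w i) = (1 / real N) * (\<Sum>s<N. W d u w (x s) - muE d u w)"
proof -
  have "(\<Sum>i<d. u i * app d (Rm N x) w i) = (\<Sum>i<d. u i * app d (Mhat N x) w i) - (\<Sum>i<d. u i * app d Emat w i)"
    unfolding app_def Rm_def by (simp add: sum_subtractf right_diff_distrib left_diff_distrib)
  also have "\<dots> = (1 / real N) * (\<Sum>s<N. W d u w (x s)) - muE d u w"
    unfolding bil_Mhat bil_Emat ..
  also have "\<dots> = (1 / real N) * (\<Sum>s<N. W d u w (x s) - muE d u w)"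
    using N by (simp add: sum_subtractf right_diff_distrib)
  finally show ?thesis .
qed

lemma chernoff:
  assumes d: "2 \<le> d" and N: "1 \<le> N" and u: "u \<in> netV d" and w: "w \<in> netV d"
    and l: "0 \<le> l" "l \<le> 1/16"
  shows "real (card {x \<in> samples N d. (\<Sum>i<d. u i * app d (Rm N x) w i) > t})
         \<le> real (card (samples N d)) * exp (- (real N * (l * t - 8192 * l^2)))"
proof -
  define S where "S = samples N d"
  define B where "B = {x \<in> S. (\<Sum>i<d. u i * app d (Rm N x) w i) > t}"
  define mu where "mu = muE d u w"
  define g where "g z = exp (l * (W d u w z - mu))" for z
  have fS: "finite S" unfolding S_def by (rule finite_samples)
  have BS: "B \<subseteq> S" unfolding B_def by auto
  have Npos: "real N > 0" using N by simp
  have mu_eq: "mu = (\<Sum>z\<in>cube d. W d u w z) / 2^d"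
    unfolding mu_def muE_def using sum_W[OF d, of u w] by simp
  have pt: "exp (l * real N * t) \<le> (\<Prod>s<N. g (x s))" if x: "x \<in> B" for x
  proof -
    have "(1 / real N) * (\<Sum>s<N. W d u w (x s) - mu) > t"
      using x bil_R[OF N, where d=d and u=u and x=x and w=w] unfolding B_def mu_def by simp
    then have "real N * t < (\<Sum>s<N. W d u w (x s) - mu)" using Npos by (simp add: field_simps)
    then have "l * (real N * t) \<le> l * (\<Sum>s<N. W d u w (x s) - mu)" using l by (intro mult_left_mono) auto
    then have "exp (l * real N * t) \<le> exp (\<Sum>s<N. l * (W d u w (x s) - mu))"
      by (simp add: sum_distrib_left mult.assoc)
    also have "\<dots> = (\<Prod>s<N. g (x s))" unfolding g_def by (simp add: exp_sum)
    finally show ?thesis .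
  qed
  have "real (card B) * exp (l * real N * t) = (\<Sum>x\<in>B. exp (l * real N * t))" by simp
  also have "\<dots> \<le> (\<Sum>x\<in>B. \<Prod>s<N. g (x s))" by (intro sum_mono pt)
  also have "\<dots> \<le> (\<Sum>x\<in>S. \<Prod>s<N. g (x s))"
    by (intro sum_mono2 fS BS) (auto simp: g_def intro: prod_nonneg)
  also have "\<dots> = (\<Sum>z\<in>cube d. g z) ^ N" unfolding S_def by (rule sum_samples_prod)
  also have "\<dots> \<le> (2^d * exp (8192 * l^2)) ^ N"
    unfolding g_def
    by (intro power_mono W_mgf[OF d netV_r2[OF u] netV_r2[OF w]] mu_eq) (use l in \<open>auto intro: sum_nonneg\<close>)
  also have "\<dots> = real (card S) * exp (real N * (8192 * l^2))"
    unfolding S_def card_samples by (simp add: power_mult_distrib exp_of_nat_mult[symmetric])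
  finally have "real (card B) * exp (l * real N * t) \<le> real (card S) * exp (real N * (8192 * l^2))" .
  then have "real (card B) \<le> real (card S) * exp (real N * (8192 * l^2)) / exp (l * real N * t)"
    by (simp add: field_simps)
  also have "\<dots> = real (card S) * exp (- (real N * (l * t - 8192 * l^2)))"
  proof -
    have "- (real N * (l * t - 8192 * l^2)) = real N * (8192 * l^2) - l * real N * t"
      by (simp add: algebra_simps)
    then show ?thesis by (simp add: exp_diff)
  qed
  finally show ?thesis unfolding B_def S_def .
qed



lemma app_Emat:
  assumes d: "2 \<le> d" and i: "i < d"
  shows "app d Emat v i = (if i = 0 then v 1 else 0) + (if i = 1 then v 0 else 0)"
proof -
  have "app d Emat v i = (\<Sum>j<d. (if j = 1 then (if i = 0 then v j else 0) else 0)
                                 + (if j = 0 then (if i = 1 then v j else 0) else 0))"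
    unfolding app_def Emat_def by (intro sum.cong refl) auto
  also have "\<dots> = (if i = 0 then v 1 else 0) + (if i = 1 then v 0 else 0)"
    using d by (simp add: sum.distrib)
  finally show ?thesis .
qed

lemma nrm_Emat:
  assumes d: "2 \<le> d" and v: "(\<Sum>j<d. (v j)^2) = 1"
  shows "nrm d (app d Emat v) \<le> 1"
proof -
  have "(\<Sum>i<d. (app d Emat v i)^2) = (\<Sum>i<d. (if i = 0 then (v 1)^2 else 0) + (if i = 1 then (v 0)^2 else 0))"
    by (intro sum.cong refl) (auto simp: app_Emat[OF d])
  also have "\<dots> = (v 1)^2 + (v 0)^2" using d by (simp add: sum.distrib)
  also have "\<dots> = (\<Sum>j\<in>{0,1}. (v j)^2)" by simp
  also have "\<dots> \<le> (\<Sum>j<d. (v j)^2)" using d by (intro sum_mono2) auto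
  finally have "(nrm d (app d Emat v))^2 \<le> 1^2" using v unfolding nrm_sq by simp
  then show ?thesis by (rule power2_le_imp_le) simp
qed

lemma spec_Mhat_le:
  assumes d: "2 \<le> d"
  shows "spec_norm d (Mhat N x) \<le> 1 + spec_norm d (Rm N x)"
proof (rule spec_least)
  show "1 \<le> d" using d by simp
  fix v :: "nat \<Rightarrow> real" assume v: "(\<Sum>j<d. (v j)^2) = 1"
  have "app d (Mhat N x) v = (\<lambda>i. app d Emat v i + app d (Rm N x) v i)"
    unfolding app_def Rm_def by (auto simp: sum.distrib[symmetric] algebra_simps)
  then have "nrm d (app d (Mhat N x) v) \<le> nrm d (app d Emat v) + nrm d (app d (Rm N x) v)"
    unfolding nrm_def by (simp add: L2_set_triangle_ineq)
  also have "\<dots> \<le> 1 + spec_norm d (Rm N x)"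
    by (intro add_mono nrm_Emat[OF d v] spec_upper[OF v])
  finally show "nrm d (app d (Mhat N x) v) \<le> 1 + spec_norm d (Rm N x)" .
qed

lemma Rm_sym: "Rm N x i j = Rm N x j i"
  unfolding Rm_def Mhat_def Emat_def by (auto simp: mult_ac)

lemma exponent_choice:
  fixes X n :: real
  assumes X: "X > 0" and n: "n > 0"
  defines "t \<equiv> 600 * (sqrt (X / n) + X / n)"
  shows "\<exists>l. 0 \<le> l \<and> l \<le> 1/16 \<and> 9 * X \<le> n * (l * t - 8192 * l^2)"
proof -
  define s where "s = sqrt (X / n)"
  have s0: "s \<ge> 0" unfolding s_def using X n by simp
  have s2: "s^2 = X / n" unfolding s_def using X n by simp
  have t0: "t \<ge> 600 * s" "t \<ge> 600 * (X / n)" unfolding t_def s_def using X n by auto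
  show ?thesis
  proof (cases "t \<le> 1024")
    case True
    define l where "l = t / 16384"
    have "t \<ge> 0" using t0 s0 by linarith
    have e: "l * t - 8192 * l^2 = t^2 / 32768" unfolding l_def by (simp add: power2_eq_square)
    have "t^2 \<ge> (600 * s)^2" using t0 s0 by (intro power_mono) auto
    then have "t^2 \<ge> 360000 * (X / n)" using s2 by (simp add: power_mult_distrib)
    then have "n * (t^2 / 32768) \<ge> n * (360000 * (X / n) / 32768)" using n by (intro mult_left_mono) auto
    also have "n * (360000 * (X / n) / 32768) = 360000 / 32768 * X" using n by (simp add: field_simps)
    finally have "9 * X \<le> n * (l * t - 8192 * l^2)" using X unfolding e by linarith
    moreover have "0 \<le> l" "l \<le> 1/16" unfolding l_def using \<open>t \<ge> 0\<close> True by auto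
    ultimately show ?thesis by blast
  next
    case False
    define l where "l = (1/16::real)"
    have e: "l * t - 8192 * l^2 \<ge> t / 32" unfolding l_def using False by (simp add: power2_eq_square)
    have "n * (t / 32) \<ge> n * (600 * (X / n) / 32)" using n t0 by (intro mult_left_mono) auto
    also have "n * (600 * (X / n) / 32) = 600 / 32 * X" using n by (simp add: field_simps)
    finally have a: "600 / 32 * X \<le> n * (t / 32)" .
    have "n * (t / 32) \<le> n * (l * t - 8192 * l^2)" using n e by (intro mult_left_mono) auto
    then have "9 * X \<le> n * (l * t - 8192 * l^2)" using a X by linarith
    moreover have "0 \<le> l" "l \<le> 1/16" unfolding l_def by auto
    ultimately show ?thesis by blast
  qed
qed



lemma net_count:
  fixes d :: nat and Y :: real
  assumes d: "2 \<le> d" and Y: "Y \<ge> 2 * real d"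
  shows "real (card (netV d))^2 * exp (- (9 * (real d * ln Y))) \<le> 1 / Y"
proof -
  have dr: "real d \<ge> 2" using d by simp
  have Y1: "Y \<ge> 4" using Y dr by linarith
  have Ypos: "Y > 0" using Y1 by simp
  have "real d ^ 3 \<ge> 2 ^ 3" using dr by (intro power_mono) auto
  then have d3: "real d ^ 3 \<ge> 8" by simp
  have "16 * real d + 1 \<le> 16 * real d * real d ^ 3"
  proof -
    have "16 * real d * 8 \<le> 16 * real d * real d ^ 3" using d3 dr by (intro mult_left_mono) auto
    then show ?thesis using dr by linarith
  qed
  also have "\<dots> = (2 * real d)^4" by (simp add: power_mult_distrib power_Suc eval_nat_numeral)
  also have "\<dots> \<le> Y^4" using Y dr by (intro power_mono) auto
  finally have base: "16 * real d + 1 \<le> Y^4" .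
  have "real (card (netV d)) \<le> real ((16 * d + 1) ^ d)" using card_netV[of d] by (simp only: of_nat_le_iff)
  also have "\<dots> = (16 * real d + 1) ^ d" by (simp add: add.commute)
  also have "\<dots> \<le> (Y^4)^d" using base by (intro power_mono) auto
  finally have cV: "real (card (netV d)) \<le> Y^(4*d)" by (simp add: power_mult)
  have "real (card (netV d))^2 \<le> (Y^(4*d))^2" using cV by (intro power_mono) auto
  also have "\<dots> = Y^(8*d)" by (simp add: power_mult[symmetric] mult_ac)
  finally have cV2: "real (card (netV d))^2 \<le> Y^(8*d)" .
  have ex: "exp (9 * (real d * ln Y)) = Y^(9*d)"
  proof -
    have "exp (9 * (real d * ln Y)) = exp (real (9*d) * ln Y)" by (simp add: mult_ac)
    also have "\<dots> = exp (ln Y) ^ (9*d)" by (rule exp_of_nat_mult)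
    also have "\<dots> = Y^(9*d)" using Ypos by simp
    finally show ?thesis .
  qed
  have "real (card (netV d))^2 * exp (- (9 * (real d * ln Y))) = real (card (netV d))^2 / Y^(9*d)"
    by (simp add: exp_minus ex divide_inverse)
  also have "\<dots> \<le> Y^(8*d) / Y^(9*d)" using cV2 Ypos by (intro divide_right_mono) auto
  also have "\<dots> = 1 / Y^d"
  proof -
    have "Y^(9*d) = Y^(8*d) * Y^d" by (simp add: power_add[symmetric])
    then show ?thesis using Ypos by simp
  qed
  also have "\<dots> \<le> 1 / Y"
  proof -
    have "Y^1 \<le> Y^d" using Y1 d by (intro power_increasing) auto
    then show ?thesis using Ypos by (intro divide_left_mono) auto
  qed
  finally show ?thesis .
qed

theorem lemma8:
  shows "\<exists>C>0. \<forall>N d \<delta>. N \<ge> 1 \<longrightarrow> d \<ge> 2 \<longrightarrow> 0 < \<delta> \<longrightarrow> \<delta> < 1 \<longrightarrow>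
     measure_pmf.prob (pmf_of_set (samples N d))
       {x. spec_norm d (Mhat N x) \<le> 1 + C * (sqrt (real d * ln (2 * real d / \<delta>) / real N)
                                         + real d * ln (2 * real d / \<delta>) / real N)}
     \<ge> 1 - \<delta>"
proof (intro exI[of _ 1000] conjI allI impI)
  fix N d :: nat and \<delta> :: real
  assume N: "N \<ge> 1" and d: "d \<ge> 2" and \<delta>0: "0 < \<delta>" and \<delta>1: "\<delta> < 1"
  define S where "S = samples N d"
  define V where "V = netV d"
  define Y where "Y = 2 * real d / \<delta>"
  define X where "X = real d * ln Y"
  define n where "n = real N"
  define t where "t = 600 * (sqrt (X / n) + X / n)"
  define G where "G = {x. spec_norm d (Mhat N x) \<le> 1 + 1000 * (sqrt (real d * ln (2 * real d / \<delta>) / real N)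
                                         + real d * ln (2 * real d / \<delta>) / real N)}"
  have dr: "real d \<ge> 2" using d by simp
  have YY: "Y \<ge> 2 * real d"
  proof -
    have "2 * real d * 1 \<le> 2 * real d * (1 / \<delta>)" using \<delta>0 \<delta>1 dr by (intro mult_left_mono) auto
    then show ?thesis unfolding Y_def by simp
  qed
  have Y1: "Y > 1" using YY dr by linarith
  have X0: "X > 0" unfolding X_def using Y1 dr by simp
  have n0: "n > 0" unfolding n_def using N by simp
  have t0: "t \<ge> 0" unfolding t_def using X0 n0 by simp
  obtain l where l: "0 \<le> l" "l \<le> 1/16" "9 * X \<le> n * (l * t - 8192 * l^2)"
    using exponent_choice[OF X0 n0] unfolding t_def by blast
  define Bad where "Bad p = {x \<in> S. (\<Sum>i<d. fst p i * app d (Rm N x) (snd p) i) > t}" for p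
  define B where "B = (\<Union>p\<in>V \<times> V. Bad p)"
  have fS: "finite S" unfolding S_def by (rule finite_samples)
  have fV: "finite V" unfolding V_def by (rule finite_netV)
  have Sne: "S \<noteq> {}" unfolding S_def by (rule samples_ne)
  have cS: "real (card S) > 0" unfolding S_def card_samples by simp
  have cBad: "real (card (Bad p)) \<le> real (card S) * exp (- (9 * X))" if p: "p \<in> V \<times> V" for p
  proof -
    have u: "fst p \<in> netV d" "snd p \<in> netV d" using p unfolding V_def by (auto simp: mem_Times_iff)
    have "real (card (Bad p)) \<le> real (card S) * exp (- (n * (l * t - 8192 * l^2)))"
      unfolding Bad_def S_def n_def by (rule chernoff[OF d N u l(1,2)])
    also have "\<dots> \<le> real (card S) * exp (- (9 * X))"
      using l(3) by (intro mult_left_mono) auto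
    finally show ?thesis .
  qed
  have "real (card B) \<le> real (\<Sum>p\<in>V \<times> V. card (Bad p))"
    unfolding B_def by (simp only: of_nat_le_iff) (rule card_UN_le, simp add: fV)
  also have "\<dots> = (\<Sum>p\<in>V \<times> V. real (card (Bad p)))" by simp
  also have "\<dots> \<le> (\<Sum>p\<in>V \<times> V. real (card S) * exp (- (9 * X)))" by (intro sum_mono cBad)
  also have "\<dots> = real (card (V \<times> V)) * (real (card S) * exp (- (9 * X)))"
    by (rule sum_constant)
  also have "\<dots> = real (card S) * (real (card V)^2 * exp (- (9 * X)))"
    by (simp only: card_cartesian_product of_nat_mult power2_eq_square mult_ac)
  also have "\<dots> \<le> real (card S) * (1 / Y)"
    unfolding X_def V_def by (intro mult_left_mono net_count[OF d YY]) auto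
  also have "\<dots> \<le> real (card S) * \<delta>"
  proof -
    have "1 / Y = \<delta> / (2 * real d)" unfolding Y_def by simp
    also have "\<dots> \<le> \<delta> / 1" using \<delta>0 dr by (intro divide_left_mono) auto
    finally show ?thesis using cS by (intro mult_left_mono) auto
  qed
  finally have cB: "real (card B) \<le> real (card S) * \<delta>" .
  have good: "x \<in> G" if x: "x \<in> S" "x \<notin> B" for x
  proof -
    have bil: "(\<Sum>i<d. u i * app d (Rm N x) w i) \<le> t" if "u \<in> V" "w \<in> V" for u w
    proof (rule ccontr)
      assume "\<not> (\<Sum>i<d. u i * app d (Rm N x) w i) \<le> t"
      then have "x \<in> Bad (u, w)" unfolding Bad_def using x(1) by simp
      then have "x \<in> B" unfolding B_def using that by blast
      then show False using x(2) by blast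
    qed
    have "spec_norm d (Rm N x) \<le> 64 * t / 47"
    proof (rule net_lemma[where V=V])
      show "1 \<le> d" using d by simp
      show "Rm N x i j = Rm N x j i" for i j by (rule Rm_sym)
      show "\<exists>w\<in>V. nrm d (\<lambda>j. v j - w j) \<le> 1/8 \<and> nrm d w \<le> 9/8" if "(\<Sum>j<d. (v j)^2) = 1" for v
        unfolding V_def by (rule net_prop) (use d that in auto)
      show "(\<Sum>i<d. u i * app d (Rm N x) w i) \<le> t" if "u \<in> V" "w \<in> V" for u w by (rule bil[OF that])
      show "t \<ge> 0" by (rule t0)
    qed
    then have "spec_norm d (Mhat N x) \<le> 1 + 64 * t / 47" using spec_Mhat_le[OF d, of N x] by linarith
    also have "\<dots> \<le> 1 + 1000 * (sqrt (X / n) + X / n)"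
    proof -
      have q0: "sqrt (X / n) + X / n \<ge> 0" using X0 n0 by simp
      define q where "q = sqrt (X / n) + X / n"
      have "64 * (600 * q) / 47 \<le> 1000 * q" using q0 unfolding q_def[symmetric] by simp
      then show ?thesis unfolding t_def q_def[symmetric] by simp
    qed
    finally have H: "spec_norm d (Mhat N x) \<le> 1 + 1000 * (sqrt (X / n) + X / n)" .
    show ?thesis unfolding G_def using H unfolding X_def Y_def n_def by blast
  qed
  have "S \<subseteq> (S \<inter> G) \<union> B" using good by auto
  moreover have BS: "B \<subseteq> S" unfolding B_def Bad_def by blast
  ultimately have "card S \<le> card ((S \<inter> G) \<union> B)"
    by (intro card_mono) (rule finite_subset[OF _ fS], blast)
  also have "\<dots> \<le> card (S \<inter> G) + card B" by (rule card_Un_le)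
  finally have "real (card S) \<le> real (card (S \<inter> G)) + real (card B)" by linarith
  then have "real (card S) * (1 - \<delta>) \<le> real (card (S \<inter> G))" using cB by (simp add: algebra_simps)
  then have "1 - \<delta> \<le> real (card (S \<inter> G)) / real (card S)" using cS by (simp add: field_simps)
  also have "\<dots> = measure_pmf.prob (pmf_of_set S) G"
    by (rule measure_pmf_of_set[OF Sne fS, symmetric])
  finally show "measure_pmf.prob (pmf_of_set (samples N d)) G \<ge> 1 - \<delta>" unfolding S_def .
qed simp

end
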